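(* Let $B:\mathbb{N}\to(0,\infty)$ and let $(p_N)_{N\in\mathbb{N}}$ be a sequence of monic univariate complex polynomials, $p_N$ of degree $N$, with $\mu_{\rm norm}(p_N)\le B(N)$ for all $N$. Let $\omega_N=\{x_1,\dots,x_N\}\subset\mathbb{S}^2$ be the points with $\pi_{\mathbb{S}^2}(x_i)=z_i$, $z_1,\dots,z_N$ the roots of $p_N$. Then $$\mathcal{E}_{\log}(\omega_N)\le \kappa N^2-N\log\Big(\frac{\sqrt{N(N+1)}}{2}\Big)+N\log B(N),$$ where $\kappa=\frac12-\log 2$.
   Context: $\mathbb{S}^2\subset\mathbb{R}^3$ is the unit sphere; $\pi_{\mathbb{S}^2}(a,b,c)=\frac{a+ib}{1-c}$ is the stereographic projection from the North pole. $\mathcal{E}_{\log}(\{x_1,\dots,x_N\})=-\sum_{i\ne j}\log\|x_i-x_j\|$. Bombieri–Weyl norm: $\|\sum_{i=0}^N a_iz^i\|=(\sum_i\binom{N}{i}^{-1}|a_i|^2)^{1/2}$. For a root $z$ of a degree-$N$ polynomial $P$, $\mu_{\rm norm}(P,z)=N^{1/2}\|P\|(1+|z|^2)^{N/2-1}/|P'(z)|$ ($=\infty$ at multiple roots) and $\mu_{\rm norm}(P)=\max_{P(z)=0}\mu_{\rm norm}(P,z)$. Note $\kappa=\int\int\log|x-y|^{-1}d\sigma(x)d\sigma(y)$ with $\sigma$ the normalized surface measure on $\mathbb{S}^2$. *)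

theory Defs
  imports "HOL-Analysis.Analysis" "HOL-Computational_Algebra.Polynomial" "HOL-Library.Extended_Real"
begin

definition stereo :: "real^3 \<Rightarrow> complex" where
  "stereo x = Complex (x$1) (x$2) / complex_of_real (1 - x$3)"

definition north_pole :: "real^3" where
  "north_pole = vector [0, 0, 1]"

definition log_energy :: "(real^3) set \<Rightarrow> real" where
  "log_energy \<omega> = - (\<Sum>(x,y)\<in>{(x,y). x \<in> \<omega> \<and> y \<in> \<omega> \<and> x \<noteq> y}. ln (norm (x - y)))"

definition bw_norm :: "complex poly \<Rightarrow> real" where
  "bw_norm P = sqrt (\<Sum>i\<le>degree P. (cmod (coeff P i))^2 / real (degree P choose i))"

definition mu_norm_at :: "complex poly \<Rightarrow> complex \<Rightarrow> ereal" where
  "mu_norm_at P z = (if poly (pderiv P) z = 0 then \<infinity> else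
     ereal (sqrt (real (degree P)) * bw_norm P * (1 + (cmod z)^2) powr (real (degree P) / 2 - 1)
            / cmod (poly (pderiv P) z)))"

definition mu_norm :: "complex poly \<Rightarrow> ereal" where
  "mu_norm P = (SUP z\<in>{z. poly P z = 0}. mu_norm_at P z)"

end

theory Submission
  imports Defs "HOL-Complex_Analysis.Complex_Analysis" "HOL-Computational_Algebra.Fundamental_Theorem_Algebra"
begin

definition E :: "real \<Rightarrow> complex" where "E s = exp (2 * of_real pi * \<i> * of_real s)"

lemma E_nz[simp]: "E s \<noteq> 0" by (simp add: E_def)
lemma norm_E[simp]: "cmod (E s) = 1" by (simp add: E_def)

lemma E_cnj: "E s * cnj (E s) = 1"
  by (metis complex_norm_square norm_E of_real_1 power_one)

lemma core_mean:
  fixes c :: complex assumes c: "cmod c < 1"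
  shows "((\<lambda>s. ln (cmod (1 - c * E s))) has_integral 0) {0..1}"
proof -
  define h where "h w = Ln (1 - c * w)" for w
  have hol: "h holomorphic_on cball 0 1"
    unfolding h_def
  proof (intro holomorphic_intros)
    fix w :: complex assume w: "w \<in> cball 0 1"
    have "cmod (c * w) \<le> cmod c" using w by (simp add: norm_mult mult_left_le)
    then have "cmod (c * w) < 1" using c by linarith
    then have "Re (c*w) < 1" using complex_Re_le_cmod le_less_trans by blast
    then have "Re (1 - c*w) > 0" by simp
    then show "1 - c * w \<notin> \<real>\<^sub>\<le>\<^sub>0" by (auto simp: complex_nonpos_Reals_iff)
  qed
  have "((\<lambda>u. h u / (u - 0)) has_contour_integral (2 * of_real pi * \<i> * h 0)) (circlepath 0 1)"
    by (rule Cauchy_integral_circlepath_simple[OF hol]) simp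
  moreover have "h 0 = 0" by (simp add: h_def)
  ultimately have 1: "((\<lambda>x. h (circlepath 0 1 x) / (circlepath 0 1 x - 0) * vector_derivative (circlepath 0 1) (at x within {0..1})) has_integral 0) {0..1}"
    unfolding has_contour_integral_def by simp
  have eq: "h (circlepath 0 1 x) / (circlepath 0 1 x - 0) * vector_derivative (circlepath 0 1) (at x within {0..1}) = (2*pi*\<i>) * h (E x)"
    if "x \<in> {0..1}" for x
  proof -
    have "circlepath 0 1 x = E x" by (simp add: circlepath E_def)
    moreover have "vector_derivative (circlepath 0 1) (at x within {0..1}) = 2*pi*\<i>* E x"
      using that by (simp add: vector_derivative_circlepath01 E_def)
    ultimately show ?thesis by simp
  qed
  have "((\<lambda>x. (2*pi*\<i>) * h (E x)) has_integral 0) {0..1}"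
    using has_integral_eq[OF eq 1] by blast
  then have "((\<lambda>x. h (E x)) has_integral 0) {0..1}"
    by (subst (asm) has_integral_mult_right_iff) auto
  then have "((\<lambda>x. Re (h (E x))) has_integral Re 0) {0..1}"
    using has_integral_Re by blast
  moreover have "Re (h (E x)) = ln (cmod (1 - c * E x))" for x
  proof -
    have "cmod (c * E x) < 1" using c by (simp add: norm_mult)
    then have "1 - c * E x \<noteq> 0" by auto
    then show ?thesis by (simp add: h_def Re_Ln)
  qed
  ultimately show ?thesis by simp
qed

lemma mean_log:
  assumes r: "r \<ge> 0" "r \<noteq> cmod b"
  shows "((\<lambda>s. ln ((cmod (of_real r * E s - b))^2)) has_integral 2 * ln (max r (cmod b))) {0..1}"
proof (cases "r < cmod b")
  case True
  then have b: "b \<noteq> 0" using r by auto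
  define c where "c = of_real r / b"
  have c: "cmod c < 1" using True b r by (simp add: c_def norm_divide)
  have eq: "ln ((cmod (of_real r * E s - b))^2) = 2 * ln (cmod b) + 2 * ln (cmod (1 - c * E s))" for s
  proof -
    have nz: "cmod (1 - c * E s) > 0"
    proof -
      have "cmod (c * E s) < 1" using c by (simp add: norm_mult)
      then show ?thesis by (metis norm_one norm_triangle_ineq2 abs_le_iff diff_gt_0_iff_gt le_less_trans order.strict_trans2 zero_less_norm_iff right_minus_eq less_irrefl)
    qed
    have "of_real r * E s - b = - b * (1 - c * E s)" using b by (simp add: c_def field_simps)
    then have "cmod (of_real r * E s - b) = cmod b * cmod (1 - c * E s)" by (simp add: norm_mult)
    then show ?thesis using nz b by (simp add: ln_mult power_mult_distrib ln_realpow)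
  qed
  have "((\<lambda>s. 2 * ln (cmod b) + 2 * ln (cmod (1 - c * E s))) has_integral (2 * ln (cmod b) + 2 * 0)) {0..1}"
    by (intro has_integral_add has_integral_mult_right core_mean c)
       (use has_integral_const_real[of "ln (cmod b)" 0 1] in simp)
  then show ?thesis using True by (simp add: eq)
next
  case False
  then have rb: "r > cmod b" using r by auto
  then have rp: "r > 0" by (meson norm_ge_zero le_less_trans)
  define c where "c = cnj b / of_real r"
  have c: "cmod c < 1" using rb rp by (simp add: c_def norm_divide)
  have eq: "ln ((cmod (of_real r * E s - b))^2) = 2 * ln r + 2 * ln (cmod (1 - c * E s))" for s
  proof -
    have nz: "cmod (1 - c * E s) > 0"
    proof -
      have "cmod (c * E s) < 1" using c by (simp add: norm_mult)
      then show ?thesis by (metis norm_one norm_triangle_ineq2 abs_le_iff diff_gt_0_iff_gt le_less_trans order.strict_trans2 zero_less_norm_iff right_minus_eq less_irrefl)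
    qed
    have "of_real r * E s - b = of_real r * E s * (1 - (b / of_real r) * cnj (E s))"
      using rp E_cnj[of s] by (simp add: field_simps)
    then have "cmod (of_real r * E s - b) = r * cmod (1 - (b / of_real r) * cnj (E s))"
      using rp by (simp add: norm_mult)
    also have "cmod (1 - (b / of_real r) * cnj (E s)) = cmod (cnj (1 - (b / of_real r) * cnj (E s)))"
      by (simp only: complex_mod_cnj)
    also have "cnj (1 - (b / of_real r) * cnj (E s)) = 1 - c * E s" by (simp add: c_def)
    finally show ?thesis using nz rp by (simp add: ln_mult power_mult_distrib ln_realpow)
  qed
  have "((\<lambda>s. 2 * ln r + 2 * ln (cmod (1 - c * E s))) has_integral (2 * ln r + 2 * 0)) {0..1}"
    by (intro has_integral_add has_integral_mult_right core_mean c)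
       (use has_integral_const_real[of "ln r" 0 1] in simp)
  then show ?thesis using rb by (simp add: eq)
qed

lemma int_lnmax:
  fixes \<sigma> :: real assumes sp: "\<sigma> > 0"
  shows "((\<lambda>t. ln (max t (\<sigma> * (1 - t)))) has_integral (ln (1 + \<sigma>) - 1)) {0..1}"
proof -
  define t0 where "t0 = \<sigma> / (1 + \<sigma>)"
  have t0: "0 < t0" "t0 < 1" using sp by (auto simp: t0_def field_simps)
  have F1: "((\<lambda>t. t * ln \<sigma> - (1 - t) * ln (1 - t) - t) has_real_derivative ln (\<sigma> * (1 - t))) (at t within {0..t0})"
    if "t \<in> {0..t0}" for t
  proof -
    have t1: "t < 1" using that t0 by auto
    show ?thesis using t1 sp by (auto intro!: derivative_eq_intros simp: ln_mult)
  qed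
  have F2: "((\<lambda>t. t * ln t - t) has_real_derivative ln t) (at t within {t0..1})"
    if "t \<in> {t0..1}" for t
  proof -
    have t1: "t > 0" using that t0 by auto
    show ?thesis using t1 by (auto intro!: derivative_eq_intros)
  qed
  have I1: "((\<lambda>t. ln (\<sigma> * (1 - t))) has_integral
      ((t0 * ln \<sigma> - (1 - t0) * ln (1 - t0) - t0) - (0 * ln \<sigma> - (1 - 0) * ln (1 - 0) - 0))) {0..t0}"
    using t0 F1 by (intro fundamental_theorem_of_calculus) (auto simp: has_real_derivative_iff_has_vector_derivative)
  have I2: "((\<lambda>t. ln t) has_integral ((1 * ln 1 - 1) - (t0 * ln t0 - t0))) {t0..1}"
    using t0 F2 by (intro fundamental_theorem_of_calculus) (auto simp: has_real_derivative_iff_has_vector_derivative)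
  have I1': "((\<lambda>t. ln (max t (\<sigma> * (1 - t)))) has_integral
      ((t0 * ln \<sigma> - (1 - t0) * ln (1 - t0) - t0) - (0 * ln \<sigma> - (1 - 0) * ln (1 - 0) - 0))) {0..t0}"
  proof (rule has_integral_eq[OF _ I1])
    fix t assume "t \<in> {0..t0}"
    then have "t \<le> \<sigma> * (1 - t)" using sp by (auto simp: t0_def field_simps)
    then show "ln (\<sigma> * (1 - t)) = ln (max t (\<sigma> * (1 - t)))" by simp
  qed
  have I2': "((\<lambda>t. ln (max t (\<sigma> * (1 - t)))) has_integral ((1 * ln 1 - 1) - (t0 * ln t0 - t0))) {t0..1}"
  proof (rule has_integral_eq[OF _ I2])
    fix t assume "t \<in> {t0..1}"
    then have "t \<ge> \<sigma> * (1 - t)" using sp by (auto simp: t0_def field_simps)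
    then show "ln t = ln (max t (\<sigma> * (1 - t)))" by simp
  qed
  have "((\<lambda>t. ln (max t (\<sigma> * (1 - t)))) has_integral
      ((t0 * ln \<sigma> - (1 - t0) * ln (1 - t0) - t0) - (0 * ln \<sigma> - (1 - 0) * ln (1 - 0) - 0)) +
      ((1 * ln 1 - 1) - (t0 * ln t0 - t0))) {0..1}"
    using t0 by (intro has_integral_combine[OF _ _ I1' I2']) auto
  moreover have "((t0 * ln \<sigma> - (1 - t0) * ln (1 - t0) - t0) - (0 * ln \<sigma> - (1 - 0) * ln (1 - 0) - 0)) +
      ((1 * ln 1 - 1) - (t0 * ln t0 - t0)) = ln (1 + \<sigma>) - 1"
  proof -
    have a: "ln t0 = ln \<sigma> - ln (1 + \<sigma>)" using sp by (simp add: t0_def ln_div)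
    have b: "1 - t0 = 1 / (1 + \<sigma>)" using sp by (simp add: t0_def field_simps)
    have c: "ln (1 - t0) = - ln (1 + \<sigma>)" using sp by (simp add: b ln_div)
    show ?thesis unfolding a c by (simp add: algebra_simps)
  qed
  ultimately show ?thesis by (simp only:)
qed

lemma has_integral_exp_ci:
  assumes "a \<noteq> 0"
  shows "((\<lambda>t. exp(a * complex_of_real t)) has_integral (exp a - 1) / a) {0..1}"
proof -
  have "\<And>t. t \<in> {0..1} \<Longrightarrow> ((\<lambda>x. exp (a * x) / a) has_vector_derivative exp (a * t)) (at t within {0..1})"
    using assms
    by (intro derivative_eq_intros has_complex_derivative_imp_has_vector_derivative [unfolded o_def] | simp)+
  then have "((\<lambda>t. exp(a * of_real t)) has_integral exp(a * complex_of_real 1)/a - exp(a * of_real 0)/a)  {0..1}"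
    by (meson fundamental_theorem_of_calculus zero_le_one)
  then show ?thesis
    by (simp add: diff_divide_distrib)
qed

lemma orth:
  "((\<lambda>s. E s ^ k * cnj (E s) ^ l) has_integral (if k = l then 1 else 0)) {0..1}"
proof (cases "k = l")
  case True
  have "E s ^ k * cnj (E s) ^ l = 1" for s
    using True by (simp add: power_mult_distrib[symmetric] E_cnj)
  then show ?thesis using True has_integral_const[of "1::complex" 0 "1::real"] by (simp add: cbox_interval)
next
  case False
  define a where "a = 2 * of_real pi * \<i> * (of_int (int k - int l) :: complex)"
  have a: "a \<noteq> 0" using False by (simp add: a_def)
  have eq: "E s ^ k * cnj (E s) ^ l = exp (a * complex_of_real s)" for s
  proof -
    have "E s ^ k = exp (of_nat k * (2 * of_real pi * \<i> * of_real s))"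
      by (simp add: E_def exp_of_nat_mult)
    moreover have "cnj (E s) ^ l = exp (of_nat l * (- (2 * of_real pi * \<i> * of_real s)))"
    proof -
      have "cnj (E s) = exp (- (2 * of_real pi * \<i> * of_real s))" by (simp add: E_def exp_cnj)
      then show ?thesis by (simp only: exp_of_nat_mult)
    qed
    ultimately show ?thesis
      by (simp add: exp_add[symmetric] a_def algebra_simps)
  qed
  have "exp a = 1"
  proof -
    have "exp a = exp ((2 * of_int (int k - int l) * pi) * \<i>)" by (simp add: a_def algebra_simps)
    also have "\<dots> = 1" by (rule exp_integer_2pi) simp
    finally show ?thesis .
  qed
  then show ?thesis using has_integral_exp_ci[OF a] False by (simp add: eq)
qed

lemma parseval:
  fixes d :: "nat \<Rightarrow> complex"
  shows "((\<lambda>s. (cmod (\<Sum>k\<le>n. d k * E s ^ k))^2) has_integral (\<Sum>k\<le>n. (cmod (d k))^2)) {0..1}"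
proof -
  have eq: "complex_of_real ((cmod (\<Sum>k\<le>n. d k * E s ^ k))^2) =
      (\<Sum>k\<le>n. \<Sum>l\<le>n. (d k * cnj (d l)) * (E s ^ k * cnj (E s) ^ l))" for s
  proof -
    have "complex_of_real ((cmod (\<Sum>k\<le>n. d k * E s ^ k))^2) =
       (\<Sum>k\<le>n. d k * E s ^ k) * cnj (\<Sum>k\<le>n. d k * E s ^ k)" by (rule complex_norm_square)
    also have "\<dots> = (\<Sum>k\<le>n. d k * E s ^ k) * (\<Sum>l\<le>n. cnj (d l) * cnj (E s) ^ l)" by simp
    also have "\<dots> = (\<Sum>k\<le>n. \<Sum>l\<le>n. (d k * E s ^ k) * (cnj (d l) * cnj (E s) ^ l))" by (rule sum_product)
    finally show ?thesis by (simp add: algebra_simps)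
  qed
  have "((\<lambda>s. \<Sum>k\<le>n. \<Sum>l\<le>n. (d k * cnj (d l)) * (E s ^ k * cnj (E s) ^ l)) has_integral
         (\<Sum>k\<le>n. \<Sum>l\<le>n. (d k * cnj (d l)) * (if k = l then 1 else 0))) {0..1}"
    by (intro has_integral_sum finite_atMost ballI has_integral_mult_right orth)
  also have "(\<Sum>k\<le>n. \<Sum>l\<le>n. (d k * cnj (d l)) * (if k = l then 1 else 0)) = (\<Sum>k\<le>n. d k * cnj (d k))"
    by (simp add: if_distrib cong: if_cong)
  also have "\<dots> = (\<Sum>k\<le>n. complex_of_real ((cmod (d k))^2))"
    by (simp only: complex_norm_square)
  also have "\<dots> = complex_of_real (\<Sum>k\<le>n. (cmod (d k))^2)"
    by (simp only: of_real_sum)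
  finally have "((\<lambda>s. complex_of_real ((cmod (\<Sum>k\<le>n. d k * E s ^ k))^2)) has_integral
        complex_of_real (\<Sum>k\<le>n. (cmod (d k))^2)) {0..1}"
    by (simp only: eq)
  from has_integral_Re[OF this] show ?thesis by simp
qed

lemma beta_nat:
  "((\<lambda>t::real. t^k * (1-t)^m) has_integral (fact k * fact m / fact (k+m+1))) {0..1}"
proof -
  have B: "((\<lambda>t. t powr (real (k+1) - 1) * (1 - t) powr (real (m+1) - 1)) has_integral Beta (real (k+1)) (real (m+1))) {0..1}"
    by (rule has_integral_Beta_real) auto
  have "((\<lambda>t::real. t^k * (1-t)^m) has_integral Beta (real (k+1)) (real (m+1))) {0..1}"
    by (rule has_integral_spike_finite[where S="{0,1}", OF _ _ B]) (auto simp: powr_realpow)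
  moreover have "Beta (real (k+1)) (real (m+1)) = fact k * fact m / fact (k+m+1)"
  proof -
    have "Gamma (real (k+1)) = fact k" using Gamma_fact[of k] by (simp add: add.commute)
    moreover have "Gamma (real (m+1)) = fact m" using Gamma_fact[of m] by (simp add: add.commute)
    moreover have "Gamma (real (k+1) + real (m+1)) = fact (k+m+1)"
      using Gamma_fact[of "k+m+1"] by (simp add: add.commute add.left_commute)
    ultimately show ?thesis by (simp add: Beta_def)
  qed
  ultimately show ?thesis by simp
qed

definition H :: "nat \<Rightarrow> complex poly \<Rightarrow> complex \<Rightarrow> complex \<Rightarrow> complex" where
  "H n q x y = (\<Sum>k\<le>n. coeff q k * x^k * y^(n-k))"

lemma H_mult:
  assumes "degree q \<le> n"
  shows "H (Suc n) ([:-a,1:] * q) x y = (x - a*y) * H n q x y"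
proof -
  have c: "coeff ([:-a,1:] * q) k = (if k = 0 then 0 else coeff q (k - 1)) - a * coeff q k" for k
    by (cases k) (simp_all add: mult_pCons_left coeff_pCons)
  have q0: "coeff q (Suc n) = 0" using assms by (simp add: coeff_eq_0)
  have "H (Suc n) ([:-a,1:] * q) x y =
     (\<Sum>k\<le>Suc n. (if k = 0 then 0 else coeff q (k - 1)) * x^k * y^(Suc n - k)) -
     (\<Sum>k\<le>Suc n. a * coeff q k * x^k * y^(Suc n - k))"
    unfolding H_def c by (simp add: algebra_simps sum_subtractf)
  also have "(\<Sum>k\<le>Suc n. (if k = 0 then 0 else coeff q (k - 1)) * x^k * y^(Suc n - k)) =
      (\<Sum>k\<le>n. coeff q k * x^(Suc k) * y^(n - k))"
    by (subst sum.atMost_Suc_shift) simp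
  also have "(\<Sum>k\<le>Suc n. a * coeff q k * x^k * y^(Suc n - k)) = (\<Sum>k\<le>n. a * coeff q k * x^k * y^(Suc n - k))"
    using q0 by simp
  also have "\<dots> = (\<Sum>k\<le>n. a * y * (coeff q k * x^k * y^(n - k)))"
    by (intro sum.cong refl) (simp add: Suc_diff_le algebra_simps)
  finally show ?thesis
    by (simp add: H_def sum_distrib_left algebra_simps sum_subtractf)
qed

lemma H_prod:
  assumes "finite R"
  shows "degree (\<Prod>z\<in>R. [:-z,1:]) = card R \<and>
         (\<Prod>z\<in>R. (x - z*y)) = H (card R) (\<Prod>z\<in>R. [:-z,1:]) x y"
  using assms
proof (induction R rule: finite_induct)
  case empty
  then show ?case by (simp add: H_def)
next
  case (insert a R)
  have d: "degree ([:-a,1:] * (\<Prod>z\<in>R. [:-z,1:])) = Suc (card R)"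
    using insert by (subst degree_mult_eq) (auto simp: prod_zero_iff)
  show ?case
    using insert d H_mult[of "\<Prod>z\<in>R. [:-z,1:]" "card R" a x y] by simp
qed

definition fz :: "complex \<Rightarrow> real \<Rightarrow> real \<Rightarrow> real" where
  "fz z t s = (cmod (complex_of_real (sqrt t) * E s - z * complex_of_real (sqrt (1 - t))))^2"

lemma cont_E: "continuous_on A E"
  unfolding E_def by (intro continuous_intros)

lemma cont_fz: "continuous_on A (\<lambda>x. fz z (fst x) (snd x))"
proof -
  have "continuous_on A (\<lambda>x. E (snd x))"
    by (rule continuous_on_compose2[OF cont_E[of UNIV]]) (auto intro: continuous_intros)
  then show ?thesis unfolding fz_def by (intro continuous_intros) auto
qed

lemma fz_nonneg: "fz z t s \<ge> 0" by (simp add: fz_def)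

lemma fz_bound:
  assumes "t \<in> {0..1}"
  shows "fz z t s \<le> (1 + cmod z)^2"
proof -
  have "cmod (complex_of_real (sqrt t) * E s - z * complex_of_real (sqrt (1 - t)))
      \<le> cmod (complex_of_real (sqrt t) * E s) + cmod (z * complex_of_real (sqrt (1 - t)))"
    by (rule norm_triangle_ineq4)
  also have "\<dots> = sqrt t + cmod z * sqrt (1 - t)" using assms by (simp add: norm_mult)
  also have "\<dots> \<le> 1 + cmod z * 1"
    using assms by (intro add_mono mult_left_mono) auto
  finally show ?thesis unfolding fz_def by (intro power_mono) auto
qed

lemma fz_zero: "t \<ge> 0 \<Longrightarrow> fz 0 t s = t"
  by (simp add: fz_def norm_mult)

lemma cont_ln_fz:
  assumes "\<delta> > 0"
  shows "continuous_on A (\<lambda>x. ln (fz z (fst x) (snd x) + \<delta>))"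
  by (intro continuous_intros cont_fz) (smt (verit) assms fz_nonneg)

lemma per_z:
  assumes d: "\<delta> > 0"
  shows "ln (1 + (cmod z)^2) - 1 \<le> integral {0..1} (\<lambda>t. integral {0..1} (\<lambda>s. ln (fz z t s + \<delta>)))"
proof -
  define G where "G t = integral {0..1} (\<lambda>s. ln (fz z t s + \<delta>))" for t
  have contG: "continuous_on {0..1} G"
    unfolding G_def cbox_interval[symmetric]
    using integral_continuous_on_param[of "{0..1}" 0 1 "\<lambda>t s. ln (fz z t s + \<delta>)"]
          cont_ln_fz[OF d, of "{0..1} \<times> cbox 0 1" z]
    by (simp add: case_prod_beta')
  have intG: "(G has_integral integral {0..1} G) {0..1}"
    using contG integrable_continuous_interval by blast
  have intin: "((\<lambda>s. ln (fz z t s + \<delta>)) has_integral G t) {0..1}" for t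
  proof -
    have "continuous_on {0..1} (\<lambda>s. ln (fz z t s + \<delta>))"
    proof -
      have "continuous_on {0..1} (Pair t)" by (intro continuous_intros)
      then show ?thesis
        using continuous_on_compose2[OF cont_ln_fz[OF d, of UNIV z], of "{0..1}" "\<lambda>s. (t, s)"] by auto
    qed
    then show ?thesis unfolding G_def using integrable_continuous_interval by blast
  qed
  show ?thesis
  proof (cases "z = 0")
    case True
    have le: "ln (max t (\<delta> * (1 - t))) \<le> G t" if t: "t \<in> {0..1}" for t
    proof -
      have Gt: "G t = ln (t + \<delta>)"
        using t has_integral_const_real[of "ln (t + \<delta>)" 0 1] intin[of t] True
        by (simp add: fz_zero has_integral_unique)
      have "max t (\<delta> * (1 - t)) > 0" using t d by (cases "t = 0") auto
      moreover have "max t (\<delta> * (1 - t)) \<le> t + \<delta>" using t d by (auto simp: algebra_simps)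
      ultimately show ?thesis unfolding Gt by (intro ln_mono)
    qed
    have "ln (1 + \<delta>) - 1 \<le> integral {0..1} G"
      by (rule has_integral_le[OF int_lnmax[OF d] intG]) (use le in auto)
    moreover have "ln (1 + \<delta>) \<ge> 0" using d by simp
    ultimately show ?thesis using True unfolding G_def by simp
  next
    case False
    define \<sigma> where "\<sigma> = (cmod z)^2"
    have sp: "\<sigma> > 0" using False by (simp add: \<sigma>_def)
    define t0 where "t0 = \<sigma> / (1 + \<sigma>)"
    define g where "g t = ln (max t (\<sigma> * (1 - t)))" for t
    have le: "g t \<le> G t" if t: "t \<in> {0..1}" "t \<noteq> t0" for t
    proof -
      define r where "r = sqrt t"
      define b where "b = z * complex_of_real (sqrt (1 - t))"
      have r0: "r \<ge> 0" using t by (simp add: r_def)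
      have cb: "cmod b = cmod z * sqrt (1 - t)" using t by (simp add: b_def norm_mult)
      have rb: "r \<noteq> cmod b"
      proof
        assume "r = cmod b"
        then have "r^2 = (cmod b)^2" by simp
        then have "t = \<sigma> * (1 - t)" using t by (simp add: r_def cb \<sigma>_def power_mult_distrib)
        then have "t = t0" using sp by (simp add: t0_def field_simps)
        then show False using t by simp
      qed
      have mpos: "max r (cmod b) > 0"
      proof (cases "t = 0")
        case True then show ?thesis using False by (simp add: cb less_max_iff_disj)
      next
        case False then show ?thesis using t by (simp add: r_def less_max_iff_disj)
      qed
      have "2 * ln (max r (cmod b)) = ln ((max r (cmod b))^2)"
        using mpos by (simp add: ln_realpow)
      also have "(max r (cmod b))^2 = max (r^2) ((cmod b)^2)"
        using r0 by (auto simp: max_def power_mono)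
      also have "max (r^2) ((cmod b)^2) = max t (\<sigma> * (1 - t))"
        using t by (simp add: r_def cb \<sigma>_def power_mult_distrib)
      finally have eqg: "2 * ln (max r (cmod b)) = g t" by (simp add: g_def)
      have ml: "((\<lambda>s. ln ((cmod (complex_of_real r * E s - b))^2)) has_integral g t) {0..1}"
        using mean_log[OF r0 rb] eqg by simp
      have fpos: "fz z t s > 0" for s
      proof -
        have "cmod (complex_of_real r * E s - b) \<ge> \<bar>cmod (complex_of_real r * E s) - cmod b\<bar>"
          by (rule norm_triangle_ineq3)
        also have "cmod (complex_of_real r * E s) = r" using r0 by (simp add: norm_mult)
        finally have "cmod (complex_of_real r * E s - b) > 0" using rb by linarith
        then show ?thesis by (simp add: fz_def r_def b_def)
      qed
      show ?thesis
      proof (rule has_integral_le[OF ml intin])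
        fix s :: real assume "s \<in> {0..1}"
        show "ln ((cmod (complex_of_real r * E s - b))^2) \<le> ln (fz z t s + \<delta>)"
          using fpos[of s] d unfolding fz_def r_def b_def by (intro ln_mono) auto
      qed
    qed
    define G' where "G' t = (if t = t0 then g t else G t)" for t
    have intG': "(G' has_integral integral {0..1} G) {0..1}"
      by (rule has_integral_spike_finite[where S="{t0}", OF _ _ intG]) (auto simp: G'_def)
    have "ln (1 + \<sigma>) - 1 \<le> integral {0..1} G"
      by (rule has_integral_le[OF int_lnmax[OF sp, folded g_def] intG']) (use le in \<open>auto simp: G'_def\<close>)
    then show ?thesis unfolding G_def \<sigma>_def .
  qed
qed

definition II :: "(real \<Rightarrow> real \<Rightarrow> real) \<Rightarrow> real" where
  "II F = integral {0..1} (\<lambda>t. integral {0..1} (F t))"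
definition C2 :: "(real \<Rightarrow> real \<Rightarrow> real) \<Rightarrow> bool" where
  "C2 F = continuous_on ({0..1}\<times>{0..1}) (\<lambda>x. F (fst x) (snd x))"

lemma C2_outer: "C2 F \<Longrightarrow> continuous_on {0..1} (\<lambda>t. integral {0..1} (F t))"
  using integral_continuous_on_param[of "{0..1}" 0 1 F] unfolding C2_def
  by (simp add: cbox_interval case_prod_beta')

lemma C2_outer_int: "C2 F \<Longrightarrow> (\<lambda>t. integral {0..1} (F t)) integrable_on {0..1}"
  using C2_outer integrable_continuous_interval by blast

lemma C2_inner: assumes "C2 F" "t \<in> {0..1}" shows "continuous_on {0..1} (F t)"
proof -
  have "continuous_on {0..1} (Pair t)" by (intro continuous_intros)
  moreover have "Pair t ` {0..1} \<subseteq> {0..1} \<times> {0..1}" using assms(2) by auto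
  ultimately show ?thesis
    using continuous_on_compose2[OF assms(1)[unfolded C2_def], of "{0..1}" "Pair t"] by auto
qed

lemma C2_inner_int: "C2 F \<Longrightarrow> t \<in> {0..1} \<Longrightarrow> F t integrable_on {0..1}"
  using C2_inner integrable_continuous_interval by blast

lemma II_le:
  assumes "C2 F" "C2 G" "\<And>t s. t \<in> {0..1} \<Longrightarrow> s \<in> {0..1} \<Longrightarrow> F t s \<le> G t s"
  shows "II F \<le> II G"
  unfolding II_def
  by (intro integral_le C2_outer_int assms ballI C2_inner_int) auto

lemma int_const01: "(\<lambda>s::real. a::real) integrable_on {0..1}"
  by (intro integrable_continuous_interval continuous_on_const)

lemma II_affine:
  assumes "C2 F"
  shows "II (\<lambda>t s. a + b * F t s) = a + b * II F"
proof -
  have "integral {0..1} (\<lambda>s. a + b * F t s) = a + b * integral {0..1} (F t)" if "t \<in> {0..1}" for t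
  proof -
    have i: "F t integrable_on {0..1}" using C2_inner_int[OF assms that] .
    have "integral {0..1} (\<lambda>s. a + b * F t s) = integral {0..1} (\<lambda>s::real. a) + integral {0..1} (\<lambda>s. b * F t s)"
      by (intro integral_add int_const01 integrable_on_mult_right i)
    then show ?thesis by simp
  qed
  then have "II (\<lambda>t s. a + b * F t s) = integral {0..1} (\<lambda>t. a + b * integral {0..1} (F t))"
    unfolding II_def by (intro integral_cong) auto
  also have "\<dots> = a + b * II F"
  proof -
    have i: "(\<lambda>t. integral {0..1} (F t)) integrable_on {0..1}" using C2_outer_int[OF assms] .
    have "integral {0..1} (\<lambda>t. a + b * integral {0..1} (F t)) = integral {0..1} (\<lambda>s::real. a) + integral {0..1} (\<lambda>t. b * integral {0..1} (F t))"
      by (intro integral_add int_const01 integrable_on_mult_right i)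
    then show ?thesis by (simp add: II_def)
  qed
  finally show ?thesis .
qed

lemma II_sum:
  assumes "finite A" "\<And>a. a \<in> A \<Longrightarrow> C2 (F a)"
  shows "II (\<lambda>t s. \<Sum>a\<in>A. F a t s) = (\<Sum>a\<in>A. II (F a))"
proof -
  have "integral {0..1} (\<lambda>s. \<Sum>a\<in>A. F a t s) = (\<Sum>a\<in>A. integral {0..1} (F a t))" if "t \<in> {0..1}" for t
    using assms that by (intro integral_sum C2_inner_int) auto
  then have "II (\<lambda>t s. \<Sum>a\<in>A. F a t s) = integral {0..1} (\<lambda>t. \<Sum>a\<in>A. integral {0..1} (F a t))"
    unfolding II_def by (intro integral_cong) auto
  also have "\<dots> = (\<Sum>a\<in>A. II (F a))"
    unfolding II_def using assms by (intro integral_sum C2_outer_int) auto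
  finally show ?thesis .
qed

lemma C2_fz: "C2 (fz z)" unfolding C2_def by (rule cont_fz)

lemma C2_prod: "finite A \<Longrightarrow> (\<And>a. a \<in> A \<Longrightarrow> C2 (F a)) \<Longrightarrow> C2 (\<lambda>t s. \<Prod>a\<in>A. F a t s)"
  unfolding C2_def by (intro continuous_on_prod) auto

lemma C2_add_const: "C2 F \<Longrightarrow> C2 (\<lambda>t s. F t s + c)"
  unfolding C2_def by (intro continuous_intros) auto

lemma C2_ln: "C2 F \<Longrightarrow> (\<And>t s. t \<in> {0..1} \<Longrightarrow> s \<in> {0..1} \<Longrightarrow> F t s > 0) \<Longrightarrow> C2 (\<lambda>t s. ln (F t s))"
  unfolding C2_def by (intro continuous_intros) (auto simp: less_le)

lemma prod_bound:
  fixes x M :: "'a \<Rightarrow> real"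
  assumes "finite A" "\<And>i. i \<in> A \<Longrightarrow> 0 \<le> x i \<and> x i \<le> M i" "0 < \<delta>" "\<delta> \<le> 1"
  shows "(\<Prod>i\<in>A. x i + \<delta>) \<le> (\<Prod>i\<in>A. x i) + \<delta> * (\<Prod>i\<in>A. M i + 2)"
  using assms(1,2)
proof (induction A rule: finite_induct)
  case empty then show ?case using assms by simp
next
  case (insert a S)
  define P where "P = (\<Prod>i\<in>S. x i)"
  define K where "K = (\<Prod>i\<in>S. M i + 2)"
  have P0: "P \<ge> 0" unfolding P_def using insert by (intro prod_nonneg) auto
  have PK: "P \<le> K" unfolding P_def K_def
  proof (intro prod_mono)
    fix i assume i: "i \<in> S"
    from insert.prems[of i] i have "0 \<le> x i" "x i \<le> M i" by auto
    then show "0 \<le> x i \<and> x i \<le> M i + 2" by linarith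
  qed
  have K0: "K \<ge> 0" using P0 PK by linarith
  have xa: "0 \<le> x a" "x a \<le> M a" using insert by auto
  have IH: "(\<Prod>i\<in>S. x i + \<delta>) \<le> P + \<delta> * K" using insert by (simp add: P_def K_def)
  have Pd0: "(\<Prod>i\<in>S. x i + \<delta>) \<ge> 0" using insert assms by (intro prod_nonneg) auto
  have "(\<Prod>i\<in>insert a S. x i + \<delta>) = (x a + \<delta>) * (\<Prod>i\<in>S. x i + \<delta>)" using insert by simp
  also have "\<dots> \<le> (x a + \<delta>) * (P + \<delta> * K)"
    using IH xa assms by (intro mult_left_mono) auto
  also have "\<dots> = x a * P + \<delta> * (x a * K + P + \<delta> * K)" by (simp add: algebra_simps)
  also have "\<dots> \<le> x a * P + \<delta> * (M a * K + K + K)"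
  proof -
    have "x a * K \<le> M a * K" using xa K0 by (intro mult_right_mono) auto
    moreover have "\<delta> * K \<le> 1 * K" using assms(4) K0 by (intro mult_right_mono) auto
    ultimately have "x a * K + P + \<delta> * K \<le> M a * K + K + K" using PK by linarith
    then show ?thesis using assms by (intro add_left_mono mult_left_mono) auto
  qed
  also have "\<dots> = (\<Prod>i\<in>insert a S. x i) + \<delta> * (\<Prod>i\<in>insert a S. M i + 2)"
    using insert by (simp add: P_def K_def algebra_simps)
  finally show ?case .
qed

lemma sqrt_pow_sq: "t \<ge> 0 \<Longrightarrow> (sqrt t ^ k)^2 = t^k"
proof -
  assume t: "t \<ge> 0"
  have "(sqrt t ^ k)^2 = (sqrt t ^ 2)^k" by (metis power_mult mult.commute)
  then show ?thesis using t by simp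
qed

lemma phi_int:
  assumes R: "finite R" and t: "t \<in> {0..1}"
  shows "((\<lambda>s. \<Prod>z\<in>R. fz z t s) has_integral
     (\<Sum>k\<le>card R. (cmod (coeff (\<Prod>z\<in>R. [:-z,1:]) k))^2 * (t^k * (1-t)^(card R - k)))) {0..1}"
proof -
  define P where "P = (\<Prod>z\<in>R. [:-z,1:])"
  define n where "n = card R"
  define d where "d k = coeff P k * complex_of_real (sqrt t ^ k * sqrt (1 - t) ^ (n - k))" for k
  have eq: "(\<Prod>z\<in>R. fz z t s) = (cmod (\<Sum>k\<le>n. d k * E s ^ k))^2" for s
  proof -
    have "(\<Prod>z\<in>R. fz z t s) = (\<Prod>z\<in>R. cmod (complex_of_real (sqrt t) * E s - z * complex_of_real (sqrt (1 - t))))^2"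
      by (simp add: fz_def prod_power_distrib)
    also have "\<dots> = (cmod (\<Prod>z\<in>R. (complex_of_real (sqrt t) * E s - z * complex_of_real (sqrt (1 - t)))))^2"
      by (simp add: prod_norm)
    also have "(\<Prod>z\<in>R. (complex_of_real (sqrt t) * E s - z * complex_of_real (sqrt (1 - t)))) =
        H n P (complex_of_real (sqrt t) * E s) (complex_of_real (sqrt (1 - t)))"
      using H_prod[OF R] by (simp add: P_def n_def)
    also have "\<dots> = (\<Sum>k\<le>n. d k * E s ^ k)"
      unfolding H_def d_def by (intro sum.cong refl) (simp add: power_mult_distrib algebra_simps)
    finally show ?thesis .
  qed
  have "((\<lambda>s. (cmod (\<Sum>k\<le>n. d k * E s ^ k))^2) has_integral (\<Sum>k\<le>n. (cmod (d k))^2)) {0..1}"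
    by (rule parseval)
  moreover have "(cmod (d k))^2 = (cmod (coeff P k))^2 * (t^k * (1-t)^(n - k))" for k
    using t by (simp add: d_def norm_mult norm_power power_mult_distrib sqrt_pow_sq)
  ultimately show ?thesis by (simp add: eq P_def n_def)
qed

lemma bw_sq:
  assumes R: "finite R"
  shows "(bw_norm (\<Prod>z\<in>R. [:-z,1:]))^2 / (real (card R) + 1) =
     (\<Sum>k\<le>card R. (cmod (coeff (\<Prod>z\<in>R. [:-z,1:]) k))^2 * (fact k * fact (card R - k) / fact (card R + 1)))"
proof -
  define P where "P = (\<Prod>z\<in>R. [:-z,1:])"
  define n where "n = card R"
  have dP: "degree P = n" using H_prod[OF R] by (simp add: P_def n_def)
  have "(bw_norm P)^2 = (\<Sum>i\<le>n. (cmod (coeff P i))^2 / real (n choose i))"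
    unfolding bw_norm_def dP by (intro real_sqrt_pow2 sum_nonneg) auto
  then have "(bw_norm P)^2 / (real n + 1) = (\<Sum>i\<le>n. (cmod (coeff P i))^2 / real (n choose i) / (real n + 1))"
    by (simp add: sum_divide_distrib)
  also have "\<dots> = (\<Sum>k\<le>n. (cmod (coeff P k))^2 * (fact k * fact (n - k) / fact (n + 1)))"
  proof (intro sum.cong refl)
    fix k assume "k \<in> {..n}"
    then have kn: "k \<le> n" by simp
    have C: "real (n choose k) = fact n / (fact k * fact (n - k))" using binomial_fact[OF kn] by simp
    have F: "(fact (n+1) :: real) = (real n + 1) * fact n" by (simp add: algebra_simps)
    show "(cmod (coeff P k))^2 / real (n choose k) / (real n + 1) = (cmod (coeff P k))^2 * (fact k * fact (n - k) / fact (n + 1))"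
      unfolding C F by (simp add: field_simps)
  qed
  finally show ?thesis by (simp add: P_def n_def)
qed

lemma II_cong: "(\<And>t s. t \<in> {0..1} \<Longrightarrow> s \<in> {0..1} \<Longrightarrow> F t s = G t s) \<Longrightarrow> II F = II G"
  unfolding II_def by (intro integral_cong) auto

lemma II_phi:
  assumes R: "finite R"
  shows "II (\<lambda>t s. \<Prod>z\<in>R. fz z t s) = (bw_norm (\<Prod>z\<in>R. [:-z,1:]))^2 / (real (card R) + 1)"
proof -
  define P where "P = (\<Prod>z\<in>R. [:-z,1:])"
  define n where "n = card R"
  define Q where "Q t = (\<Sum>k\<le>n. (cmod (coeff P k))^2 * (t^k * (1-t)^(n - k)))" for t
  have "integral {0..1} (\<lambda>s. \<Prod>z\<in>R. fz z t s) = Q t" if "t \<in> {0..1}" for t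
    using phi_int[OF R that] by (simp add: Q_def P_def n_def integral_unique)
  then have "II (\<lambda>t s. \<Prod>z\<in>R. fz z t s) = integral {0..1} Q"
    unfolding II_def by (intro integral_cong) auto
  also have "(Q has_integral (\<Sum>k\<le>n. (cmod (coeff P k))^2 * (fact k * fact (n - k) / fact (n + 1)))) {0..1}"
    unfolding Q_def
  proof (intro has_integral_sum finite_atMost ballI has_integral_mult_right)
    fix k assume "k \<in> {..n}"
    then have "k + (n - k) + 1 = n + 1" by simp
    then show "((\<lambda>t::real. t^k * (1-t)^(n - k)) has_integral (fact k * fact (n - k) / fact (n + 1))) {0..1}"
      using beta_nat[of k "n - k"] by simp
  qed
  then have "integral {0..1} Q = (\<Sum>k\<le>n. (cmod (coeff P k))^2 * (fact k * fact (n - k) / fact (n + 1)))"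
    by (rule integral_unique)
  also have "\<dots> = (bw_norm P)^2 / (real n + 1)" using bw_sq[OF R] by (simp add: P_def n_def)
  finally show ?thesis by (simp add: P_def n_def)
qed

lemma key_ineq:
  assumes R: "finite R" and bwp: "bw_norm (\<Prod>z\<in>R. [:-z,1:]) > 0"
  shows "(\<Sum>z\<in>R. (ln (1 + (cmod z)^2) - 1)) \<le> ln ((bw_norm (\<Prod>z\<in>R. [:-z,1:]))^2 / (real (card R) + 1))"
proof -
  define \<beta> where "\<beta> = (bw_norm (\<Prod>z\<in>R. [:-z,1:]))^2 / (real (card R) + 1)"
  define n where "n = card R"
  define K where "K = (\<Prod>z\<in>R. (1 + cmod z)^2 + 2)"
  define X where "X = (\<Sum>z\<in>R. (ln (1 + (cmod z)^2) - 1))"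
  define \<Phi> where "\<Phi> = (\<lambda>t s. \<Prod>z\<in>R. fz z t s)"
  have bp: "\<beta> > 0" using bwp by (simp add: \<beta>_def)
  have K0: "K > 0" unfolding K_def by (intro prod_pos) (auto intro: add_nonneg_pos)
  have C2\<Phi>: "C2 \<Phi>" unfolding \<Phi>_def using R by (intro C2_prod C2_fz)
  have II\<Phi>: "II \<Phi> = \<beta>" unfolding \<Phi>_def \<beta>_def by (rule II_phi[OF R])
  have main: "X \<le> ln (\<beta> + \<delta> * K)" if d: "0 < \<delta>" "\<delta> \<le> 1" for \<delta>
  proof -
    define \<Phi>d where "\<Phi>d = (\<lambda>t s. \<Prod>z\<in>R. fz z t s + \<delta>)"
    have C2d: "C2 \<Phi>d" unfolding \<Phi>d_def using R by (intro C2_prod C2_add_const C2_fz)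
    have \<Phi>dpos: "\<Phi>d t s \<ge> \<delta> ^ n" for t s
    proof -
      have "(\<Prod>z\<in>R. \<delta>) \<le> (\<Prod>z\<in>R. fz z t s + \<delta>)"
        using d by (intro prod_mono) (auto simp: fz_nonneg)
      then show ?thesis by (simp add: \<Phi>d_def n_def)
    qed
    have dn: "\<delta> ^ n > 0" using d by simp
    define c where "c = II \<Phi>d"
    have c_up: "c \<le> \<delta> * K + 1 * \<beta>"
    proof -
      have "c \<le> II (\<lambda>t s. \<delta> * K + 1 * \<Phi> t s)"
        unfolding c_def
      proof (rule II_le[OF C2d])
        show "C2 (\<lambda>t s. \<delta> * K + 1 * \<Phi> t s)"
          using C2\<Phi> unfolding C2_def by (intro continuous_intros) auto
        fix t s :: real assume t: "t \<in> {0..1}" and s: "s \<in> {0..1}"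
        have "\<Phi>d t s \<le> \<Phi> t s + \<delta> * K"
          unfolding \<Phi>d_def \<Phi>_def K_def
          using R d t by (intro prod_bound) (auto simp: fz_nonneg fz_bound)
        then show "\<Phi>d t s \<le> \<delta> * K + 1 * \<Phi> t s" by simp
      qed
      also have "\<dots> = \<delta> * K + 1 * \<beta>" by (simp only: II_affine[OF C2\<Phi>] II\<Phi>)
      finally show ?thesis .
    qed
    have c_low: "\<delta> ^ n \<le> c"
    proof -
      have "II (\<lambda>t s. \<delta> ^ n + 0 * \<Phi> t s) \<le> c"
        unfolding c_def
      proof (rule II_le[OF _ C2d])
        show "C2 (\<lambda>t s. \<delta> ^ n + 0 * \<Phi> t s)"
          using C2\<Phi> unfolding C2_def by (intro continuous_intros) auto
      qed (use \<Phi>dpos in simp)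
      moreover have "II (\<lambda>t s. \<delta> ^ n + 0 * \<Phi> t s) = \<delta> ^ n" by (subst II_affine[OF C2\<Phi>]) simp
      ultimately show ?thesis by simp
    qed
    have cp: "c > 0" using c_low dn by linarith
    have C2ln: "C2 (\<lambda>t s. ln (\<Phi>d t s))"
      using C2d by (rule C2_ln) (use \<Phi>dpos dn in \<open>auto intro: less_le_trans\<close>)
    have "II (\<lambda>t s. ln (\<Phi>d t s)) \<le> II (\<lambda>t s. (ln c - 1) + (1 / c) * \<Phi>d t s)"
    proof (rule II_le[OF C2ln])
      show "C2 (\<lambda>t s. (ln c - 1) + (1 / c) * \<Phi>d t s)"
        using C2d unfolding C2_def by (intro continuous_intros) auto
      fix t s :: real
      have y: "\<Phi>d t s > 0" using \<Phi>dpos[of t s] dn by linarith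
      have "ln (\<Phi>d t s / c) \<le> \<Phi>d t s / c - 1" using y cp by (intro ln_le_minus_one) simp
      then show "ln (\<Phi>d t s) \<le> (ln c - 1) + (1 / c) * \<Phi>d t s"
        using y cp by (simp add: ln_div)
    qed
    also have "\<dots> = ln c - 1 + (1 / c) * c" by (subst II_affine[OF C2d]) (simp add: c_def)
    also have "\<dots> = ln c" using cp by simp
    finally have L1: "II (\<lambda>t s. ln (\<Phi>d t s)) \<le> ln c" .
    have C2z: "C2 (\<lambda>t s. ln (fz z t s + \<delta>))" for z
      by (intro C2_ln C2_add_const C2_fz) (use d fz_nonneg in \<open>auto intro: add_nonneg_pos\<close>)
    have "II (\<lambda>t s. ln (\<Phi>d t s)) = II (\<lambda>t s. \<Sum>z\<in>R. ln (fz z t s + \<delta>))"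
    proof (rule II_cong)
      fix t s :: real
      show "ln (\<Phi>d t s) = (\<Sum>z\<in>R. ln (fz z t s + \<delta>))"
        unfolding \<Phi>d_def using R
      proof (intro ln_prod)
        fix z assume "z \<in> R"
        show "fz z t s + \<delta> \<noteq> 0" using fz_nonneg[of z t s] d by linarith
      qed
    qed
    also have "\<dots> = (\<Sum>z\<in>R. II (\<lambda>t s. ln (fz z t s + \<delta>)))"
      using R C2z by (intro II_sum) auto
    finally have L2: "II (\<lambda>t s. ln (\<Phi>d t s)) = (\<Sum>z\<in>R. II (\<lambda>t s. ln (fz z t s + \<delta>)))" .
    have "X \<le> (\<Sum>z\<in>R. II (\<lambda>t s. ln (fz z t s + \<delta>)))"
      unfolding X_def II_def using per_z[OF d(1)] by (intro sum_mono) auto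
    also have "\<dots> \<le> ln c" using L1 L2 by simp
    also have "\<dots> \<le> ln (\<beta> + \<delta> * K)" using cp c_up by simp
    finally show ?thesis .
  qed
  show ?thesis
  proof (rule ccontr)
    assume "\<not> ?thesis"
    then have Xb: "X > ln \<beta>" by (simp add: X_def \<beta>_def)
    then have "exp (ln \<beta>) < exp X" by simp
    then have eb: "exp X > \<beta>" using bp by simp
    define \<delta> where "\<delta> = min 1 ((exp X - \<beta>) / (2 * K))"
    have d0: "\<delta> > 0" using eb K0 by (simp add: \<delta>_def)
    have d1: "\<delta> \<le> 1" by (simp add: \<delta>_def)
    have "\<delta> * K \<le> (exp X - \<beta>) / (2 * K) * K" using K0 by (intro mult_right_mono) (auto simp: \<delta>_def)
    also have "\<dots> = (exp X - \<beta>) / 2" using K0 by simp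
    finally have h: "\<delta> * K \<le> (exp X - \<beta>) / 2" .
    have "(exp X - \<beta>) / 2 < exp X - \<beta>" using eb by (simp add: field_simps)
    then have "\<beta> + \<delta> * K < exp X" using h by linarith
    moreover have "\<beta> + \<delta> * K > 0" using bp d0 K0 by (simp add: add_pos_pos)
    ultimately have "ln (\<beta> + \<delta> * K) < ln (exp X)" by (subst ln_less_cancel_iff) auto
    then have "ln (\<beta> + \<delta> * K) < X" by simp
    then show False using main[OF d0 d1] by linarith
  qed
qed

lemma norm3_sq: "(norm (x::real^3))^2 = (x$1)^2 + (x$2)^2 + (x$3)^2"
  unfolding power2_norm_eq_inner by (simp add: inner_vec_def sum_3 power2_eq_square inner_real_def)

definition istereo :: "complex \<Rightarrow> real^3" where
  "istereo z = vector [2 * Re z / (1 + (cmod z)^2), 2 * Im z / (1 + (cmod z)^2), ((cmod z)^2 - 1) / ((cmod z)^2 + 1)]"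

lemma istereo_comp:
  "istereo z $ 1 = 2 * Re z / (1 + (cmod z)^2)"
  "istereo z $ 2 = 2 * Im z / (1 + (cmod z)^2)"
  "istereo z $ 3 = ((cmod z)^2 - 1) / ((cmod z)^2 + 1)"
  by (simp_all add: istereo_def)

lemma north_comp: "north_pole $ 1 = 0" "north_pole $ 2 = 0" "north_pole $ 3 = 1"
  by (simp_all add: north_pole_def)

lemma cmod_sq: "(cmod z)^2 = (Re z)^2 + (Im z)^2"
  by (simp add: cmod_def)

lemma istereo_sphere: "istereo z \<in> sphere 0 1"
proof -
  define q where "q = (Re z)^2 + (Im z)^2"
  have q0: "q \<ge> 0" by (simp add: q_def)
  have "(norm (istereo z))^2 = (2 * Re z / (1 + q))^2 + (2 * Im z / (1 + q))^2 + ((q - 1) / (q + 1))^2"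
    by (simp add: norm3_sq istereo_comp cmod_sq q_def)
  also have "\<dots> = (4 * ((Re z)^2 + (Im z)^2) + (q - 1)^2) / (1 + q)^2"
    using q0 by (simp add: power_divide add_divide_distrib power_mult_distrib add.commute)
  also have "\<dots> = (4 * q + (q - 1)^2) / (1 + q)^2" by (simp add: q_def)
  also have "4 * q + (q - 1)^2 = (1 + q)^2" by (simp add: power2_eq_square algebra_simps)
  also have "(1 + q)^2 / (1 + q)^2 = 1" using q0 by simp
  finally have "(norm (istereo z))^2 = 1" .
  then have "norm (istereo z) = 1 \<or> norm (istereo z) = -1" by (simp add: power2_eq_1_iff)
  then have "norm (istereo z) = 1" using norm_ge_zero[of "istereo z"] by linarith
  then show ?thesis by simp
qed

lemma istereo_north: "istereo z \<noteq> north_pole"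
proof
  assume "istereo z = north_pole"
  then have "istereo z $ 3 = 1" by (simp add: north_comp)
  then show False by (simp add: istereo_comp add_nonneg_pos field_simps)
qed

lemma stereo_istereo: "stereo (istereo z) = z"
proof -
  define q where "q = (cmod z)^2"
  have q0: "q \<ge> 0" by (simp add: q_def)
  have q1: "q + 1 \<noteq> 0" "1 + q \<noteq> 0" using q0 by auto
  have c3: "1 - istereo z $ 3 = 2 / (1 + q)" using q1 unfolding istereo_comp q_def[symmetric] by (simp add: field_simps)
  have "stereo (istereo z) = Complex (2 * Re z / (1 + q)) (2 * Im z / (1 + q)) / complex_of_real (2 / (1 + q))"
    unfolding stereo_def c3 by (simp add: istereo_comp q_def)
  also have "\<dots> = Complex ((2 * Re z / (1 + q)) / (2 / (1 + q))) ((2 * Im z / (1 + q)) / (2 / (1 + q)))"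
    by (simp add: complex_eq_iff)
  also have "(2 * Re z / (1 + q)) / (2 / (1 + q)) = Re z" using q1 by simp
  also have "(2 * Im z / (1 + q)) / (2 / (1 + q)) = Im z" using q1 by simp
  finally show ?thesis by simp
qed

lemma istereo_stereo:
  assumes x: "x \<in> sphere 0 1" "x \<noteq> north_pole"
  shows "istereo (stereo x) = x"
proof -
  define a b c where "a = x$1" "b = x$2" "c = x$3"
  have n: "a^2 + b^2 + c^2 = 1" using x(1) norm3_sq[of x] by (simp add: a_b_c_def)
  have c1: "c \<noteq> 1"
  proof
    assume "c = 1"
    then have "a^2 + b^2 = 0" using n by simp
    then have "a = 0" "b = 0" by (auto simp: sum_power2_eq_zero_iff)
    then have "x = north_pole" using \<open>c = 1\<close>
      by (simp add: vec_eq_iff forall_3 north_comp a_b_c_def)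
    then show False using x by simp
  qed
  have cl: "c < 1"
  proof -
    have "c^2 \<le> 1" using n by (smt (verit) zero_le_power2)
    then have "\<bar>c\<bar> \<le> 1" using abs_square_le_1 by blast
    then have "c \<le> 1" by linarith
    then show ?thesis using c1 by simp
  qed
  have z: "stereo x = Complex (a / (1 - c)) (b / (1 - c))"
    using cl by (simp add: stereo_def complex_eq_iff a_b_c_def)
  have q: "(cmod (stereo x))^2 = (1 + c) / (1 - c)"
  proof -
    have "(cmod (stereo x))^2 = (a^2 + b^2) / (1 - c)^2" unfolding z cmod_sq
      by (simp add: power_divide add_divide_distrib)
    also have "a^2 + b^2 = (1 - c) * (1 + c)" using n by (simp add: algebra_simps power2_eq_square)
    finally show ?thesis using cl by (simp add: power2_eq_square)
  qed
  have d: "1 + (cmod (stereo x))^2 = 2 / (1 - c)" using cl unfolding q by (simp add: field_simps)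
  show ?thesis
  proof (simp add: vec_eq_iff forall_3, intro conjI)
    show "istereo (stereo x) $ 1 = x $ 1" unfolding istereo_comp d using cl by (simp add: z a_b_c_def)
    show "istereo (stereo x) $ 2 = x $ 2" unfolding istereo_comp d using cl by (simp add: z a_b_c_def)
    show "istereo (stereo x) $ 3 = x $ 3" unfolding istereo_comp q using cl by (simp add: field_simps a_b_c_def)
  qed
qed

lemma poly_id:
  fixes u v u' v' :: real
  shows "4 * (u * (1 + (u'^2 + v'^2)) - u' * (1 + (u^2 + v^2)))^2 + 4 * (v * (1 + (u'^2 + v'^2)) - v' * (1 + (u^2 + v^2)))^2
     + (2 * (u^2 + v^2) - 2 * (u'^2 + v'^2))^2 = 4 * ((u - u')^2 + (v - v')^2) * (1 + (u^2 + v^2)) * (1 + (u'^2 + v'^2))"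
  by (simp add: power2_eq_square algebra_simps)

lemma cancel_ab: "(a::real) \<noteq> 0 \<Longrightarrow> b \<noteq> 0 \<Longrightarrow> 4 * X * a * b / (a^2 * b^2) = 4 * X / (a * b)"
  by (simp add: power2_eq_square field_simps)

lemma istereo_dist:
  "(norm (istereo z - istereo w))^2 = 4 * (cmod (z - w))^2 / ((1 + (cmod z)^2) * (1 + (cmod w)^2))"
proof -
  define u v u' v' where "u = Re z" "v = Im z" "u' = Re w" "v' = Im w"
  define q q' where "q = u^2 + v^2" "q' = u'^2 + v'^2"
  have q0: "q \<ge> 0" "q' \<ge> 0" by (simp_all add: q_q'_def)
  have "(norm (istereo z - istereo w))^2 =
      (2 * u / (1 + q) - 2 * u' / (1 + q'))^2 + (2 * v / (1 + q) - 2 * v' / (1 + q'))^2 + ((q - 1) / (q + 1) - (q' - 1) / (q' + 1))^2"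
    by (simp add: norm3_sq istereo_comp cmod_sq u_v_u'_v'_def q_q'_def)
  also have "\<dots> = (4 * (u * (1 + q') - u' * (1 + q))^2 + 4 * (v * (1 + q') - v' * (1 + q))^2 + (2 * q - 2 * q')^2) / ((1 + q)^2 * (1 + q')^2)"
  proof -
    have n: "1 + q \<noteq> 0" "1 + q' \<noteq> 0" "q + 1 \<noteq> 0" "q' + 1 \<noteq> 0" using q0 by auto
    have d1: "2 * u / (1 + q) - 2 * u' / (1 + q') = (2 * (u * (1 + q') - u' * (1 + q))) / ((1 + q) * (1 + q'))"
      using n by (simp add: field_simps)
    have d2: "2 * v / (1 + q) - 2 * v' / (1 + q') = (2 * (v * (1 + q') - v' * (1 + q))) / ((1 + q) * (1 + q'))"
      using n by (simp add: field_simps)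
    have d3: "(q - 1) / (q + 1) - (q' - 1) / (q' + 1) = (2 * q - 2 * q') / ((1 + q) * (1 + q'))"
      using n by (simp add: field_simps)
    show ?thesis unfolding d1 d2 d3
      by (simp add: power_divide power_mult_distrib add_divide_distrib) (simp add: power2_eq_square algebra_simps)
  qed
  also have "4 * (u * (1 + q') - u' * (1 + q))^2 + 4 * (v * (1 + q') - v' * (1 + q))^2 + (2 * q - 2 * q')^2 =
      4 * ((u - u')^2 + (v - v')^2) * (1 + q) * (1 + q')"
    unfolding q_q'_def by (rule poly_id)
  also have "4 * ((u - u')^2 + (v - v')^2) * (1 + q) * (1 + q') / ((1 + q)^2 * (1 + q')^2) = 4 * ((u - u')^2 + (v - v')^2) / ((1 + q) * (1 + q'))"
    by (rule cancel_ab) (use q0 in auto)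
  also have "(u - u')^2 + (v - v')^2 = (cmod (z - w))^2" by (simp add: cmod_sq u_v_u'_v'_def)
  also have "(1 + q) * (1 + q') = (1 + (cmod z)^2) * (1 + (cmod w)^2)" by (simp add: cmod_sq u_v_u'_v'_def q_q'_def)
  finally show ?thesis .
qed

lemma roots_facts:
  fixes P :: "complex poly"
  assumes lc: "lead_coeff P = 1"
    and simple: "\<And>z. poly P z = 0 \<Longrightarrow> poly (pderiv P) z \<noteq> 0"
  shows "finite {z. poly P z = 0}" "P = (\<Prod>z\<in>{z. poly P z = 0}. [:-z,1:])"
        "card {z. poly P z = 0} = degree P"
proof -
  have P0: "P \<noteq> 0" using lc by auto
  show fin: "finite {z. poly P z = 0}" using poly_roots_finite[OF P0] .
  have "rsquarefree P" using simple by (auto simp: rsquarefree_roots)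
  from complex_poly_decompose_rsquarefree[OF this]
  show eq: "P = (\<Prod>z\<in>{z. poly P z = 0}. [:-z,1:])" using lc by simp
  have "degree (\<Prod>z\<in>{z. poly P z = 0}. [:-z,1:]) = card {z. poly P z = 0}"
    using H_prod[OF fin] by blast
  then show "card {z. poly P z = 0} = degree P" using eq by simp
qed

lemma pderiv_root:
  fixes R :: "complex set"
  assumes R: "finite R" and z: "z \<in> R"
  shows "poly (pderiv (\<Prod>w\<in>R. [:-w,1:])) z = (\<Prod>w\<in>R-{z}. z - w)"
proof -
  have "poly (pderiv (\<Prod>w\<in>R. [:-w,1:])) z = (\<Sum>a\<in>R. \<Prod>w\<in>R - {a}. - w + z)"
    by (simp add: pderiv_prod poly_sum poly_prod pderiv_pCons)
  also have "\<dots> = (\<Sum>a\<in>R. \<Prod>w\<in>R - {a}. z - w)"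
    by (intro sum.cong prod.cong refl) (simp add: algebra_simps)
  also have "\<dots> = (\<Prod>w\<in>R-{z}. z - w) + (\<Sum>a\<in>R - {z}. \<Prod>w\<in>R - {a}. z - w)"
    using R z by (simp add: sum.remove)
  also have "(\<Sum>a\<in>R - {z}. \<Prod>w\<in>R - {a}. z - w) = 0"
  proof (intro sum.neutral ballI)
    fix a assume "a \<in> R - {z}"
    then have "z \<in> R - {a}" using z by auto
    then show "(\<Prod>w\<in>R - {a}. z - w) = 0" using R by (intro prod_zero) auto
  qed
  finally show ?thesis by simp
qed

lemma istereo_inj: "inj istereo"
  by (metis injI stereo_istereo)

lemma energy_eq:
  fixes R :: "complex set"
  assumes R: "finite R"
  shows "log_energy (istereo ` R) = - (\<Sum>z\<in>R. \<Sum>w\<in>R-{z}. ln (norm (istereo z - istereo w)))"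
proof -
  define h where "h = (\<lambda>(z, w). (istereo z, istereo w))"
  have set: "{(x,y). x \<in> istereo ` R \<and> y \<in> istereo ` R \<and> x \<noteq> y} = h ` (Sigma R (\<lambda>z. R - {z}))"
  proof (intro equalityI subsetI)
    fix p assume "p \<in> {(x,y). x \<in> istereo ` R \<and> y \<in> istereo ` R \<and> x \<noteq> y}"
    then obtain z w where zw: "z \<in> R" "w \<in> R" "p = (istereo z, istereo w)" "istereo z \<noteq> istereo w" by auto
    then have "z \<noteq> w" by auto
    then show "p \<in> h ` (Sigma R (\<lambda>z. R - {z}))" using zw unfolding h_def by force
  next
    fix p assume "p \<in> h ` (Sigma R (\<lambda>z. R - {z}))"
    then obtain z w where zw: "z \<in> R" "w \<in> R" "z \<noteq> w" "p = (istereo z, istereo w)" unfolding h_def by auto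
    then have "istereo z \<noteq> istereo w" using istereo_inj by (auto dest: injD)
    then show "p \<in> {(x,y). x \<in> istereo ` R \<and> y \<in> istereo ` R \<and> x \<noteq> y}" using zw by auto
  qed
  have inj: "inj_on h (Sigma R (\<lambda>z. R - {z}))"
    using istereo_inj unfolding inj_on_def h_def by (auto dest: injD)
  have "log_energy (istereo ` R) = - (\<Sum>(x,y)\<in>h ` (Sigma R (\<lambda>z. R - {z})). ln (norm (x - y)))"
    unfolding log_energy_def set ..
  also have "(\<Sum>(x,y)\<in>h ` (Sigma R (\<lambda>z. R - {z})). ln (norm (x - y))) =
      (\<Sum>(z,w)\<in>Sigma R (\<lambda>z. R - {z}). ln (norm (istereo z - istereo w)))"
    by (subst sum.reindex[OF inj]) (simp add: h_def case_prod_beta' comp_def)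
  also have "\<dots> = (\<Sum>z\<in>R. \<Sum>w\<in>R-{z}. ln (norm (istereo z - istereo w)))"
    using R by (subst sum.Sigma) auto
  finally show ?thesis .
qed

lemma ln_dist:
  assumes "z \<noteq> w"
  shows "ln (norm (istereo z - istereo w)) = ln 2 + ln (cmod (z - w)) - ln (1 + (cmod z)^2) / 2 - ln (1 + (cmod w)^2) / 2"
proof -
  have zw: "cmod (z - w) > 0" using assms by simp
  have az: "1 + (cmod z)^2 > 0" "1 + (cmod w)^2 > 0" by (auto intro: add_pos_nonneg)
  have nz: "norm (istereo z - istereo w) > 0"
    using assms stereo_istereo by (metis zero_less_norm_iff right_minus_eq)
  have "2 * ln (norm (istereo z - istereo w)) = ln ((norm (istereo z - istereo w))^2)"
    using nz by (simp add: ln_realpow)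
  also have "\<dots> = ln (4 * (cmod (z - w))^2 / ((1 + (cmod z)^2) * (1 + (cmod w)^2)))"
    by (simp add: istereo_dist)
  also have "\<dots> = ln 4 + 2 * ln (cmod (z - w)) - ln (1 + (cmod z)^2) - ln (1 + (cmod w)^2)"
    using zw az by (simp add: ln_div ln_mult ln_realpow)
  also have "ln (4::real) = 2 * ln 2"
    using ln_realpow[of 2 2] by simp
  finally show ?thesis by simp
qed

lemma bw_ge1:
  assumes "lead_coeff P = 1"
  shows "bw_norm P \<ge> 1"
proof -
  have "(1::real) = (cmod (coeff P (degree P)))^2 / real (degree P choose degree P)"
    using assms by simp
  also have "\<dots> \<le> (\<Sum>i\<le>degree P. (cmod (coeff P i))^2 / real (degree P choose i))"
    by (rule member_le_sum) auto
  finally have "1 \<le> (\<Sum>i\<le>degree P. (cmod (coeff P i))^2 / real (degree P choose i))" .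
  then show ?thesis unfolding bw_norm_def by (simp add: real_le_rsqrt)
qed

theorem theorem3p2:
  fixes B :: "nat \<Rightarrow> real" and p :: "nat \<Rightarrow> complex poly"
  assumes Bpos: "\<And>N. B N > 0"
    and monic: "\<And>N. N \<ge> 1 \<Longrightarrow> lead_coeff (p N) = 1"
    and deg: "\<And>N. N \<ge> 1 \<Longrightarrow> degree (p N) = N"
    and cond: "\<And>N. N \<ge> 1 \<Longrightarrow> mu_norm (p N) \<le> ereal (B N)"
    and N: "N \<ge> 1"
  shows "log_energy {x \<in> sphere 0 1. x \<noteq> north_pole \<and> poly (p N) (stereo x) = 0}
           \<le> (1/2 - ln 2) * (real N)^2 - real N * ln (sqrt (real N * (real N + 1)) / 2)
              + real N * ln (B N)"
proof -
  define P where "P = p N"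
  have lc: "lead_coeff P = 1" using monic[OF N] by (simp add: P_def)
  have dg: "degree P = N" using deg[OF N] by (simp add: P_def)
  define R where "R = {z. poly P z = 0}"
  have mu_le: "mu_norm_at P z \<le> ereal (B N)" if "z \<in> R" for z
  proof -
    have "mu_norm_at P z \<le> mu_norm P"
      unfolding mu_norm_def using that by (intro SUP_upper) (simp add: R_def)
    also have "\<dots> \<le> ereal (B N)" using cond[OF N] by (simp add: P_def)
    finally show ?thesis .
  qed
  have simple: "poly (pderiv P) z \<noteq> 0" if "poly P z = 0" for z
  proof
    assume "poly (pderiv P) z = 0"
    then have "mu_norm_at P z = \<infinity>" by (simp add: mu_norm_at_def)
    then show False using mu_le[of z] that by (simp add: R_def)
  qed
  have finR: "finite R" and Peq: "P = (\<Prod>z\<in>R. [:-z,1:])" and cardR: "card R = N"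
    using roots_facts[OF lc simple] dg by (simp_all add: R_def)
  define bw where "bw = bw_norm P"
  have bw1: "bw \<ge> 1" using bw_ge1[OF lc] by (simp add: bw_def)
  define L where "L z = ln (1 + (cmod z)^2)" for z
  define D where "D z = cmod (poly (pderiv P) z)" for z
  define SL where "SL = (\<Sum>z\<in>R. L z)"
  define SP where "SP = (\<Sum>z\<in>R. ln (D z))"
  have Dpos: "D z > 0" if "z \<in> R" for z using simple[of z] that by (simp add: D_def R_def)
  have Sset: "{x \<in> sphere 0 1. x \<noteq> north_pole \<and> poly (p N) (stereo x) = 0} = istereo ` R"
  proof (intro equalityI subsetI)
    fix x assume "x \<in> {x \<in> sphere 0 1. x \<noteq> north_pole \<and> poly (p N) (stereo x) = 0}"
    then have x: "x \<in> sphere 0 1" "x \<noteq> north_pole" "poly P (stereo x) = 0" by (auto simp: P_def)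
    then have "x = istereo (stereo x)" using istereo_stereo by simp
    moreover have "stereo x \<in> R" using x by (simp add: R_def)
    ultimately show "x \<in> istereo ` R" by blast
  next
    fix x assume "x \<in> istereo ` R"
    then obtain z where z: "z \<in> R" "x = istereo z" by auto
    then show "x \<in> {x \<in> sphere 0 1. x \<noteq> north_pole \<and> poly (p N) (stereo x) = 0}"
      using istereo_sphere istereo_north stereo_istereo by (simp add: R_def P_def)
  qed
  have inner: "(\<Sum>w\<in>R-{z}. ln (norm (istereo z - istereo w))) =
       (real N - 1) * ln 2 + ln (D z) - (real N - 1) * L z / 2 - (SL - L z) / 2" if z: "z \<in> R" for z
  proof -
    have "(\<Sum>w\<in>R-{z}. ln (norm (istereo z - istereo w))) =
        (\<Sum>w\<in>R-{z}. ln 2 + ln (cmod (z - w)) - L z / 2 - L w / 2)"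
      by (intro sum.cong refl) (auto simp: ln_dist L_def)
    also have "\<dots> = real (card (R-{z})) * ln 2 + (\<Sum>w\<in>R-{z}. ln (cmod (z - w))) - real (card (R-{z})) * L z / 2 - (\<Sum>w\<in>R-{z}. L w) / 2"
      by (simp add: sum.distrib sum_subtractf sum_divide_distrib)
    also have "real (card (R-{z})) = real N - 1" using finR z cardR N by (simp add: of_nat_diff)
    also have "(\<Sum>w\<in>R-{z}. ln (cmod (z - w))) = ln (D z)"
    proof -
      have "(\<Sum>w\<in>R-{z}. ln (cmod (z - w))) = ln (\<Prod>w\<in>R-{z}. cmod (z - w))"
        using finR by (subst ln_prod) auto
      also have "(\<Prod>w\<in>R-{z}. cmod (z - w)) = cmod (\<Prod>w\<in>R-{z}. z - w)" by (simp add: prod_norm)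
      also have "(\<Prod>w\<in>R-{z}. z - w) = poly (pderiv P) z" using pderiv_root[OF finR z] Peq by simp
      finally show ?thesis by (simp add: D_def)
    qed
    also have "(\<Sum>w\<in>R-{z}. L w) = SL - L z" using finR z by (simp add: SL_def sum_diff1)
    finally show ?thesis .
  qed
  have F1: "log_energy (istereo ` R) = - (real N * (real N - 1) * ln 2 + SP - (real N - 1) * SL)"
  proof -
    have "log_energy (istereo ` R) = - (\<Sum>z\<in>R. (real N - 1) * ln 2 + ln (D z) - (real N - 1) * L z / 2 - (SL - L z) / 2)"
      using energy_eq[OF finR] inner by simp
    also have "(\<Sum>z\<in>R. (real N - 1) * ln 2 + ln (D z) - (real N - 1) * L z / 2 - (SL - L z) / 2)
        = real N * (real N - 1) * ln 2 + SP - (real N - 1) * SL / 2 - (real N * SL - SL) / 2"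
    proof -
      have a: "(\<Sum>z\<in>R. (real N - 1) * L z / 2) = (real N - 1) * sum L R / 2"
        by (simp add: sum_distrib_left sum_divide_distrib)
      have b: "(\<Sum>z\<in>R. (sum L R - L z) / 2) = (real N * sum L R - sum L R) / 2"
        by (simp add: sum_divide_distrib[symmetric] sum_subtractf cardR)
      show ?thesis
        by (simp add: sum.distrib sum_subtractf sum_distrib_left[symmetric] cardR SP_def SL_def a b)
    qed
    finally show ?thesis by (simp add: algebra_simps)
  qed
  have F2z: "ln (sqrt (real N)) + ln bw + (real N / 2 - 1) * L z - ln (D z) \<le> ln (B N)" if z: "z \<in> R" for z
  proof -
    have "poly (pderiv P) z \<noteq> 0" using simple z by (simp add: R_def)
    then have "mu_norm_at P z = ereal (sqrt (real N) * bw * (1 + (cmod z)^2) powr (real N / 2 - 1) / D z)"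
      by (simp add: mu_norm_at_def dg bw_def D_def)
    then have le: "sqrt (real N) * bw * (1 + (cmod z)^2) powr (real N / 2 - 1) / D z \<le> B N"
      using mu_le[OF z] by simp
    have pos: "sqrt (real N) > 0" "bw > 0" "(1 + (cmod z)^2) powr (real N / 2 - 1) > 0" "D z > 0"
    proof -
      have "1 + (cmod z)^2 > 0" by (simp add: add_pos_nonneg)
      then show "(1 + (cmod z)^2) powr (real N / 2 - 1) > 0" by simp
    qed (use N bw1 Dpos[OF z] in auto)
    have "ln (sqrt (real N) * bw * (1 + (cmod z)^2) powr (real N / 2 - 1) / D z) \<le> ln (B N)"
      using le pos Bpos[of N] by (subst ln_le_cancel_iff) auto
    moreover have "ln (sqrt (real N) * bw * (1 + (cmod z)^2) powr (real N / 2 - 1) / D z) =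
        ln (sqrt (real N)) + ln bw + (real N / 2 - 1) * L z - ln (D z)"
      using pos by (simp add: ln_div ln_mult ln_powr L_def add_pos_nonneg)
    ultimately show ?thesis by simp
  qed
  have F2: "real N * (ln (sqrt (real N)) + ln bw) + (real N / 2 - 1) * SL - SP \<le> real N * ln (B N)"
  proof -
    have "(\<Sum>z\<in>R. ln (sqrt (real N)) + ln bw + (real N / 2 - 1) * L z - ln (D z)) \<le> (\<Sum>z\<in>R. ln (B N))"
      using F2z by (intro sum_mono) auto
    moreover have "(\<Sum>z\<in>R. ln (sqrt (real N)) + ln bw + (real N / 2 - 1) * L z - ln (D z)) =
        real N * (ln (sqrt (real N)) + ln bw) + (real N / 2 - 1) * SL - SP"
      by (simp add: sum.distrib sum_subtractf sum_distrib_left[symmetric] cardR SP_def SL_def)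
    ultimately show ?thesis using cardR by simp
  qed
  have F3: "SL - real N \<le> 2 * ln bw - ln (real N + 1)"
  proof -
    have bwp: "bw_norm (\<Prod>z\<in>R. [:-z,1:]) > 0" using bw1 Peq by (simp add: bw_def)
    have "(\<Sum>z\<in>R. (ln (1 + (cmod z)^2) - 1)) \<le> ln ((bw_norm (\<Prod>z\<in>R. [:-z,1:]))^2 / (real (card R) + 1))"
      by (rule key_ineq[OF finR bwp])
    moreover have "(\<Sum>z\<in>R. (ln (1 + (cmod z)^2) - 1)) = SL - real N"
      by (simp add: sum_subtractf SL_def L_def cardR)
    moreover have "ln ((bw_norm (\<Prod>z\<in>R. [:-z,1:]))^2 / (real (card R) + 1)) = 2 * ln bw - ln (real N + 1)"
      using bw1 Peq by (simp add: bw_def cardR ln_div ln_realpow)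
    ultimately show ?thesis by simp
  qed
  have F3': "real N / 2 * (SL - real N) \<le> real N / 2 * (2 * ln bw - ln (real N + 1))"
    using F3 by (intro mult_left_mono) auto
  have F4: "ln (sqrt (real N * (real N + 1)) / 2) = ln (real N) / 2 + ln (real N + 1) / 2 - ln 2"
    using N by (simp add: ln_div ln_sqrt ln_mult add_pos_pos)
  have F5: "ln (sqrt (real N)) = ln (real N) / 2" using N by (simp add: ln_sqrt)
  have "log_energy {x \<in> sphere 0 1. x \<noteq> north_pole \<and> poly (p N) (stereo x) = 0} =
      - (real N * (real N - 1) * ln 2 + SP - (real N - 1) * SL)"
    using Sset F1 by simp
  also have "\<dots> \<le> (1/2 - ln 2) * (real N)^2 - real N * ln (sqrt (real N * (real N + 1)) / 2)
              + real N * ln (B N)"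
    using F2 F3' unfolding F4 F5 by (simp add: algebra_simps power2_eq_square) argo
  finally show ?thesis .
qed

end
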